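(* Let $d\ge1$, $m\in\mathbb{N}$ ($m\ge1$), and let $A_0,A_1\in\mathbb{R}^{d\times d}$ be constant matrices. Let $G:\mathbb{Z}_0^\infty\to\mathbb{R}^{d\times d}$ satisfy $A_1G(u)=G(u)A_1$ for all $u\in\mathbb{Z}_0^\infty$, and let $\Psi:\mathbb{Z}_{-m}^0\to\mathbb{R}^{d\times d}$ satisfy $A_1\Psi(u)=\Psi(u)A_1$ for all $u\in\mathbb{Z}_{-m}^0$. Let $Z$ be the discrete function defined in the context. Then \[ X(u)=Z(u)\Psi(-m)+\sum_{r=-m+1}^{0}Z(u-m-r)\,\Delta\Psi(r-1)+\sum_{r=1}^{u}Z(u-m-r)\,G(r-1),\qquad u\in\mathbb{Z}_{-m}^{\infty} \] (an empty sum being $\Theta$), is the unique solution of \[ \Delta X(u)=A_0X(u-m)+X(u-m)A_1+G(u),\ \ u\in\mathbb{Z}_0^{\infty},\qquad X(u)=\Psi(u),\ \ u\in\mathbb{Z}_{-m}^{0}. \]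
   Context: $\Theta$ and $I$ denote the $d\times d$ zero and identity matrices; $\mathbb{Z}_a^b=\{a,a+1,\dots,b\}$ (with $\mathbb{Z}_a^\infty=\{a,a+1,\dots\}$ and $\mathbb{Z}_{-\infty}^b=\{\dots,b-1,b\}$); $\Delta X(u)=X(u+1)-X(u)$. For integers $a$ and $r\ge0$, $\binom{a}{r}=a(a-1)\cdots(a-r+1)/r!$. Define matrices $Q_{r+1}(rm)$, $r=0,1,2,\dots$, by $Q_1(0)=I$ and $Q_{r+1}(rm)=A_0Q_r((r-1)m)+Q_r((r-1)m)A_1$ for $r\ge1$. Define $Z(u)=\Theta$ for $u\in\mathbb{Z}_{-\infty}^{-m-1}$, $Z(u)=I$ for $u\in\mathbb{Z}_{-m}^{0}$, and for each integer $n\ge1$ and $u\in\mathbb{Z}_{(n-1)(m+1)+1}^{n(m+1)}$, \[ Z(u)=\sum_{r=0}^{n}\binom{u-(r-1)m}{r}Q_{r+1}(rm). \] *)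

theory Defs
  imports "HOL-Analysis.Analysis"
begin

text \<open>d x d real matrices are modelled as real^'n^'n with 'n a finite index type (d = CARD('n)).
  QQ A0 A1 r corresponds to the paper's Q_{r+1}(rm).\<close>

fun QQ :: "real^'n^'n \<Rightarrow> real^'n^'n \<Rightarrow> nat \<Rightarrow> real^'n^'n" where
  "QQ A0 A1 0 = mat 1"
| "QQ A0 A1 (Suc r) = A0 ** QQ A0 A1 r + QQ A0 A1 r ** A1"

definition ibinom :: "int \<Rightarrow> nat \<Rightarrow> real" where
  "ibinom a r = (real_of_int a) gchoose r"

text \<open>The discrete function Z. For u \<ge> 1, n is the unique integer \<ge> 1 with
  (n-1)(m+1)+1 \<le> u \<le> n(m+1), i.e. n = (u-1) div (m+1) + 1.\<close>
definition ZZ :: "real^'n^'n \<Rightarrow> real^'n^'n \<Rightarrow> nat \<Rightarrow> int \<Rightarrow> real^'n^'n" where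
  "ZZ A0 A1 m u =
     (if u < - int m then 0
      else if u \<le> 0 then mat 1
      else (let n = nat ((u - 1) div (int m + 1) + 1) in
            \<Sum>r\<in>{0..n}. ibinom (u - (int r - 1) * int m) r *\<^sub>R QQ A0 A1 r))"

definition Xsol :: "real^'n^'n \<Rightarrow> real^'n^'n \<Rightarrow> nat \<Rightarrow> (int \<Rightarrow> real^'n^'n)
     \<Rightarrow> (int \<Rightarrow> real^'n^'n) \<Rightarrow> int \<Rightarrow> real^'n^'n" where
  "Xsol A0 A1 m \<Psi> G u =
     ZZ A0 A1 m u ** \<Psi> (- int m)
     + (\<Sum>r\<in>{- int m + 1..0}. ZZ A0 A1 m (u - int m - r) ** (\<Psi> r - \<Psi> (r - 1)))
     + (\<Sum>r\<in>{1..u}. ZZ A0 A1 m (u - int m - r) ** G (r - 1))"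

definition is_solution :: "real^'n^'n \<Rightarrow> real^'n^'n \<Rightarrow> nat \<Rightarrow> (int \<Rightarrow> real^'n^'n)
     \<Rightarrow> (int \<Rightarrow> real^'n^'n) \<Rightarrow> (int \<Rightarrow> real^'n^'n) \<Rightarrow> bool" where
  "is_solution A0 A1 m \<Psi> G X \<longleftrightarrow>
     (\<forall>u\<ge>0. X (u + 1) - X u = A0 ** X (u - int m) + X (u - int m) ** A1 + G u) \<and>
     (\<forall>u\<in>{- int m..0}. X u = \<Psi> u)"

end

theory Submission
  imports Defs
begin



lemma mm_rdistrib: "((A::real^'n^'m) + B) ** (C::real^'p^'n) = A ** C + B ** C"
  by (vector matrix_matrix_mult_def sum.distrib[symmetric] field_simps)

lemma mm_ldiff: "(A::real^'n^'m) ** ((B::real^'p^'n) - C) = A ** B - A ** C"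
  using matrix_add_ldistrib[of A "B - C" C] by simp

lemma mm_rdiff: "((A::real^'n^'m) - B) ** (C::real^'p^'n) = A ** C - B ** C"
  using mm_rdistrib[of "A - B" B C] by simp

lemma mm_sum_left: "(A::real^'n^'m) ** (\<Sum>i\<in>S. (f i::real^'p^'n)) = (\<Sum>i\<in>S. A ** f i)"
  by (induction S rule: infinite_finite_induct) (auto simp: matrix_add_ldistrib)

lemma mm_sum_right: "(\<Sum>i\<in>S. (f i::real^'n^'m)) ** (A::real^'p^'n) = (\<Sum>i\<in>S. f i ** A)"
  by (induction S rule: infinite_finite_induct) (auto simp: mm_rdistrib)

lemma mm_scale_right: "(A::real^'n^'m) ** (k *\<^sub>R (B::real^'p^'n)) = k *\<^sub>R (A ** B)"
  by (simp add: matrix_scalar_ac scalar_matrix_assoc)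

lemma mm_scale_left: "(k *\<^sub>R (A::real^'n^'m)) ** (B::real^'p^'n) = k *\<^sub>R (A ** B)"
  by (simp add: scalar_matrix_assoc)

definition Zs :: "real^'n^'n \<Rightarrow> real^'n^'n \<Rightarrow> nat \<Rightarrow> nat \<Rightarrow> int \<Rightarrow> real^'n^'n" where
  "Zs A0 A1 m N u = (\<Sum>r\<in>{0..N}. ibinom (u - (int r - 1) * int m) r *\<^sub>R QQ A0 A1 r)"

lemma Z_neg: "u < - int m \<Longrightarrow> ZZ A0 A1 m u = 0"
  by (simp add: ZZ_def)

lemma Z_mid: "- int m \<le> u \<Longrightarrow> u \<le> 0 \<Longrightarrow> ZZ A0 A1 m u = mat 1"
  by (simp add: ZZ_def)

lemma Z_pos: "u \<ge> 1 \<Longrightarrow> ZZ A0 A1 m u = Zs A0 A1 m (nat ((u - 1) div (int m + 1) + 1)) u"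
  by (simp add: ZZ_def Zs_def Let_def)

lemma ibinom_zero: "0 \<le> a \<Longrightarrow> a < int k \<Longrightarrow> ibinom a k = 0"
proof -
  assume "0 \<le> a" "a < int k"
  then have "real_of_int a = of_nat (nat a)" by simp
  moreover have "nat a choose k = 0" using \<open>0 \<le> a\<close> \<open>a < int k\<close> by simp
  ultimately show ?thesis unfolding ibinom_def by (metis binomial_gbinomial of_nat_0)
qed



lemma Z_pos2:
  assumes "u \<ge> 1"
  shows "ZZ A0 A1 m u = Zs A0 A1 m (nat (u div (int m + 1) + 1)) u"
proof (cases "(u - 1) div (int m + 1) = u div (int m + 1)")
  case True then show ?thesis using Z_pos[OF assms, of A0 A1 m] by simp
next
  case False
  define d where "d = int m + 1"
  have d0: "d > 0" unfolding d_def by simp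
  define q where "q = (u - 1) div d"
  define r where "r = (u - 1) mod d"
  have qr: "u - 1 = q * d + r" unfolding q_def r_def by (metis div_mult_mod_eq)
  have r0: "0 \<le> r" "r < d" unfolding r_def using d0 by auto
  have "r + 1 = d"
  proof (rule ccontr)
    assume "r + 1 \<noteq> d"
    then have a: "u = q * d + (r + 1)" "0 \<le> r + 1" "r + 1 < d" using qr r0 by auto
    have "u = (r + 1) + q * d" using a by simp
    then have "u div d = (r + 1) div d + q" using d0 by simp
    also have "(r + 1) div d = 0" using a by (simp add: div_pos_pos_trivial)
    finally have "u div d = q" by simp
    with False show False unfolding q_def d_def by simp
  qed
  then have ue: "u = (q + 1) * d" using qr by (simp add: algebra_simps)
  define k where "k = q + 1"
  have kd: "u div d = k" using ue d0 unfolding k_def by simp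
  have k1: "k \<ge> 1" using ue assms d0 unfolding k_def by (smt (verit) mult_nonpos_nonneg)
  have d1: "(u - 1) div (int m + 1) = k - 1" unfolding k_def q_def d_def by simp
  have k_def': "k = u div (int m + 1)" using kd d_def by simp
  have ue: "u = k * (int m + 1)" using ue unfolding k_def d_def .
  have nk: "nat (u div (int m + 1) + 1) = Suc (nat k)" using k1 k_def' by simp
  have nk2: "nat ((u - 1) div (int m + 1) + 1) = nat k" using d1 by simp
  have ak: "u - (int (Suc (nat k)) - 1) * int m = k" using ue k1 by (simp add: algebra_simps)
  have "ibinom k (Suc (nat k)) = 0" using k1 by (intro ibinom_zero) auto
  then have "ibinom (u - (int (Suc (nat k)) - 1) * int m) (Suc (nat k)) = 0" unfolding ak .
  then show ?thesis using Z_pos[OF assms, of A0 A1 m] unfolding nk nk2 Zs_def by simp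
qed



lemma Zs_one: "Zs A0 A1 m (Suc 0) w = mat 1 + real_of_int w *\<^sub>R (A0 + A1)"
  by (simp add: Zs_def ibinom_def)

lemma Z_first:
  assumes "0 \<le> v" "v \<le> int m + 1"
  shows "ZZ A0 A1 m v = mat 1 + real_of_int v *\<^sub>R (A0 + A1)"
proof (cases "v = 0")
  case True then show ?thesis by (simp add: ZZ_def)
next
  case False
  then have "(v - 1) div (int m + 1) = 0" using assms by (simp add: div_pos_pos_trivial)
  then show ?thesis using Z_pos[of v A0 A1 m] False assms by (simp add: Zs_one)
qed



lemma sum_shift_diff:
  "(\<Sum>r\<in>{0..Suc k}. (f r::'a::ab_group_add)) - (\<Sum>r\<in>{0..Suc k}. g r)
     = (f 0 - g 0) + (\<Sum>s\<le>k. f (Suc s) - g (Suc s))"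
  unfolding atLeast0AtMost sum.atMost_Suc_shift by (simp add: sum_subtractf)

lemma Zs_diff:
  "Zs A0 A1 m (Suc k) (w + 1) - Zs A0 A1 m (Suc k) w
    = A0 ** Zs A0 A1 m k (w - int m) + Zs A0 A1 m k (w - int m) ** A1"
proof -
  define c where "c s = ibinom (w - int s * int m) s" for s
  have L: "Zs A0 A1 m (Suc k) (w + 1) - Zs A0 A1 m (Suc k) w
      = (\<Sum>s\<le>k. c s *\<^sub>R QQ A0 A1 (Suc s))"
  proof -
    have e: "ibinom (w + 1 - (int (Suc s) - 1) * int m) (Suc s)
             - ibinom (w - (int (Suc s) - 1) * int m) (Suc s) = c s" for s
    proof -
      have X1: "real_of_int (w + 1 - (int (Suc s) - 1) * int m) = real_of_int (w - int s * int m) + 1"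
        by simp
      have X2: "real_of_int (w - (int (Suc s) - 1) * int m) = real_of_int (w - int s * int m)"
        by simp
      show ?thesis unfolding ibinom_def c_def X1 X2
        by (simp only: gbinomial_Suc_Suc add_diff_cancel_right')
    qed
    let ?f = "\<lambda>r. ibinom (w + 1 - (int r - 1) * int m) r *\<^sub>R QQ A0 A1 r"
    let ?g = "\<lambda>r. ibinom (w - (int r - 1) * int m) r *\<^sub>R QQ A0 A1 r"
    have "Zs A0 A1 m (Suc k) (w + 1) - Zs A0 A1 m (Suc k) w
      = (?f 0 - ?g 0) + (\<Sum>s\<le>k. ?f (Suc s) - ?g (Suc s))"
      unfolding Zs_def by (rule sum_shift_diff)
    also have "\<dots> = (\<Sum>s\<le>k. c s *\<^sub>R QQ A0 A1 (Suc s))"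
    proof -
      have 0: "?f 0 - ?g 0 = 0" by (simp add: ibinom_def)
      have 1: "?f (Suc s) - ?g (Suc s) = c s *\<^sub>R QQ A0 A1 (Suc s)" for s
        using e[of s] by (metis scaleR_diff_left)
      show ?thesis by (simp only: 0 1 add_0_left)
    qed
    finally show ?thesis .
  qed
  have R: "A0 ** Zs A0 A1 m k (w - int m) + Zs A0 A1 m k (w - int m) ** A1
      = (\<Sum>s\<le>k. c s *\<^sub>R QQ A0 A1 (Suc s))"
  proof -
    have cc: "ibinom (w - int m - (int s - 1) * int m) s = c s" for s
      unfolding c_def by (simp add: algebra_simps)
    show ?thesis
      unfolding Zs_def atLeast0AtMost mm_sum_left mm_sum_right cc
      by (simp add: mm_scale_left mm_scale_right sum.distrib[symmetric] scaleR_add_right)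
  qed
  show ?thesis using L R by simp
qed




lemma Zrec:
  assumes "v \<ge> 0"
  shows "ZZ A0 A1 m (v + 1) - ZZ A0 A1 m v = A0 ** ZZ A0 A1 m (v - int m) + ZZ A0 A1 m (v - int m) ** A1"
proof (cases "v \<le> int m")
  case True
  have a: "ZZ A0 A1 m (v + 1) = mat 1 + real_of_int (v + 1) *\<^sub>R (A0 + A1)"
    using assms True by (intro Z_first) auto
  have b: "ZZ A0 A1 m v = mat 1 + real_of_int v *\<^sub>R (A0 + A1)"
    using assms True by (intro Z_first) auto
  have c: "ZZ A0 A1 m (v - int m) = mat 1" using assms True by (intro Z_mid) auto
  show ?thesis unfolding a b c by (simp add: scaleR_add_left)
next
  case False
  define k where "k = nat (v div (int m + 1))"
  have "v div (int m + 1) \<ge> (int m + 1) div (int m + 1)" using False by (intro zdiv_mono1) auto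
  then have k1: "v div (int m + 1) \<ge> 1" by simp
  have a: "ZZ A0 A1 m (v + 1) = Zs A0 A1 m (Suc k) (v + 1)"
    using Z_pos[of "v + 1" A0 A1 m] assms k1 unfolding k_def by (simp add: nat_add_distrib)
  have b: "ZZ A0 A1 m v = Zs A0 A1 m (Suc k) v"
    using Z_pos2[of v A0 A1 m] assms k1 False unfolding k_def by (simp add: nat_add_distrib)
  have dd: "(v - int m - 1) div (int m + 1) + 1 = v div (int m + 1)"
  proof -
    have "v - int m - 1 = v + (-1) * (int m + 1)" by simp
    then have "(v - int m - 1) div (int m + 1) = v div (int m + 1) + (-1)"
      by (metis div_mult_self1 add.commute of_nat_less_0_iff not_one_le_zero
          add_nonneg_nonneg of_nat_0_le_iff zero_le_one linorder_not_le less_add_same_cancel1 le_less)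
    then show ?thesis by simp
  qed
  have c: "ZZ A0 A1 m (v - int m) = Zs A0 A1 m k (v - int m)"
    using Z_pos[of "v - int m" A0 A1 m] False dd unfolding k_def by simp
  show ?thesis unfolding a b c by (rule Zs_diff)
qed

lemma Zrec_all:
  assumes "v \<noteq> - int m - 1"
  shows "ZZ A0 A1 m (v + 1) - ZZ A0 A1 m v = A0 ** ZZ A0 A1 m (v - int m) + ZZ A0 A1 m (v - int m) ** A1"
proof (cases "v \<ge> 0")
  case True then show ?thesis by (rule Zrec)
next
  case False
  have c: "ZZ A0 A1 m (v - int m) = 0" using False by (intro Z_neg) auto
  show ?thesis
  proof (cases "v < - int m")
    case True
    then have "v + 1 < - int m" using assms by auto
    then show ?thesis using True c Z_neg[of "v+1" m A0 A1] Z_neg[of v m A0 A1] by simp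
  next
    case False
    then show ?thesis using \<open>\<not> v \<ge> 0\<close> c Z_mid[of m "v+1" A0 A1] Z_mid[of m v A0 A1] by simp
  qed
qed

definition LL :: "real^'n^'n \<Rightarrow> real^'n^'n \<Rightarrow> real^'n^'n \<Rightarrow> real^'n^'n" where
  "LL A0 A1 Y = A0 ** Y + Y ** A1"

lemma LL_add: "LL A0 A1 (X + Y) = LL A0 A1 X + LL A0 A1 Y"
  by (simp add: LL_def matrix_add_ldistrib mm_rdistrib)

lemma LL_sum: "LL A0 A1 (\<Sum>i\<in>S. f i) = (\<Sum>i\<in>S. LL A0 A1 (f i))"
  by (simp add: LL_def mm_sum_left mm_sum_right sum.distrib)

lemma LL_comm: "A1 ** B = B ** A1 \<Longrightarrow> LL A0 A1 (Y ** B) = LL A0 A1 Y ** B"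
  by (simp add: LL_def mm_rdistrib matrix_mul_assoc[symmetric])

lemma Zrec_LL:
  assumes "v \<noteq> - int m - 1"
  shows "ZZ A0 A1 m (v + 1) = ZZ A0 A1 m v + LL A0 A1 (ZZ A0 A1 m (v - int m))"
  using Zrec_all[OF assms, of A0 A1] unfolding LL_def by (simp add: algebra_simps)



lemma telescope_int:
  "(\<Sum>r\<in>{a + 1..a + int n}. (f r - f (r - 1)) :: 'a::ab_group_add) = f (a + int n) - f a"
proof (induction n)
  case 0 then show ?case by simp
next
  case (Suc n)
  have e: "{a + 1..a + int (Suc n)} = insert (a + int n + 1) {a + 1..a + int n}" by auto
  show ?case unfolding e using Suc by (simp add: algebra_simps)
qed

lemma Xinit:
  assumes "u \<in> {- int m..0}"
  shows "Xsol A0 A1 m \<Psi> G u = \<Psi> u"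
proof -
  have u: "- int m \<le> u" "u \<le> 0" using assms by auto
  have Z0: "ZZ A0 A1 m u = mat 1" using u by (rule Z_mid)
  have S2: "{1..u} = {}" using u by auto
  have S1: "(\<Sum>r\<in>{- int m + 1..0}. ZZ A0 A1 m (u - int m - r) ** (\<Psi> r - \<Psi> (r - 1)))
      = (\<Sum>r\<in>{- int m + 1..u}. (\<Psi> r - \<Psi> (r - 1)))"
  proof (rule sum.mono_neutral_cong_right)
    show "finite {- int m + 1..0}" by simp
    show "{- int m + 1..u} \<subseteq> {- int m + 1..0}" using u by auto
    show "\<forall>i\<in>{- int m + 1..0} - {- int m + 1..u}.
        ZZ A0 A1 m (u - int m - i) ** (\<Psi> i - \<Psi> (i - 1)) = 0"
    proof
      fix i assume "i \<in> {- int m + 1..0} - {- int m + 1..u}"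
      then have "u - int m - i < - int m" by auto
      then show "ZZ A0 A1 m (u - int m - i) ** (\<Psi> i - \<Psi> (i - 1)) = 0" by (simp add: Z_neg)
    qed
    fix x assume "x \<in> {- int m + 1..u}"
    then have "ZZ A0 A1 m (u - int m - x) = mat 1" using u by (intro Z_mid) auto
    then show "ZZ A0 A1 m (u - int m - x) ** (\<Psi> x - \<Psi> (x - 1)) = \<Psi> x - \<Psi> (x - 1)" by simp
  qed
  have T: "(\<Sum>r\<in>{- int m + 1..u}. (\<Psi> r - \<Psi> (r - 1))) = \<Psi> u - \<Psi> (- int m)"
    using telescope_int[where a="- int m" and n="nat (u + int m)" and f=\<Psi>] u by simp
  show ?thesis unfolding Xsol_def Z0 S2 S1 T by simp
qed

lemma Xrec:
  assumes Gc: "\<And>u. u \<ge> 0 \<Longrightarrow> A1 ** G u = G u ** A1"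
    and Pc: "\<And>u. u \<in> {- int m..0} \<Longrightarrow> A1 ** \<Psi> u = \<Psi> u ** A1"
    and u0: "u \<ge> 0"
  shows "Xsol A0 A1 m \<Psi> G (u + 1) = Xsol A0 A1 m \<Psi> G u
           + LL A0 A1 (Xsol A0 A1 m \<Psi> G (u - int m)) + G u"
proof -
  let ?Z = "ZZ A0 A1 m" and ?L = "LL A0 A1" and ?M = "int m"
  define D where "D r = \<Psi> r - \<Psi> (r - 1)" for r
  have Dc: "A1 ** D r = D r ** A1" if "r \<in> {- ?M + 1..0}" for r
    using Pc[of r] Pc[of "r - 1"] that unfolding D_def by (simp add: mm_ldiff mm_rdiff)
  have T1: "?Z (u + 1) ** \<Psi> (- ?M) = ?Z u ** \<Psi> (- ?M) + ?L (?Z (u - ?M) ** \<Psi> (- ?M))"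
  proof -
    have "?Z (u + 1) = ?Z u + ?L (?Z (u - ?M))" using u0 by (intro Zrec_LL) auto
    then show ?thesis using Pc[of "- ?M"] by (simp add: mm_rdistrib LL_comm)
  qed
  have T2: "(\<Sum>r\<in>{- ?M + 1..0}. ?Z (u + 1 - ?M - r) ** D r)
      = (\<Sum>r\<in>{- ?M + 1..0}. ?Z (u - ?M - r) ** D r)
        + ?L (\<Sum>r\<in>{- ?M + 1..0}. ?Z (u - ?M - ?M - r) ** D r)"
  proof -
    have "?Z (u + 1 - ?M - r) ** D r = ?Z (u - ?M - r) ** D r + ?L (?Z (u - ?M - ?M - r) ** D r)"
      if r: "r \<in> {- ?M + 1..0}" for r
    proof -
      have e: "u + 1 - ?M - r = (u - ?M - r) + 1" by simp
      have "?Z ((u - ?M - r) + 1) = ?Z (u - ?M - r) + ?L (?Z (u - ?M - r - ?M))"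
        using u0 r by (intro Zrec_LL) auto
      moreover have "u - ?M - r - ?M = u - ?M - ?M - r" by simp
      ultimately show ?thesis unfolding e using Dc[OF r] by (simp add: mm_rdistrib LL_comm)
    qed
    then show ?thesis by (simp add: LL_sum sum.distrib)
  qed
  have T3: "(\<Sum>r\<in>{1..u + 1}. ?Z (u + 1 - ?M - r) ** G (r - 1))
      = (\<Sum>r\<in>{1..u}. ?Z (u - ?M - r) ** G (r - 1)) + G u
        + ?L (\<Sum>r\<in>{1..u - ?M}. ?Z (u - ?M - ?M - r) ** G (r - 1))"
  proof -
    have e1: "{1..u + 1} = insert (u + 1) {1..u}" using u0 by auto
    have zm: "?Z (- ?M) = mat 1" by (rule Z_mid) auto
    have a: "(\<Sum>r\<in>{1..u + 1}. ?Z (u + 1 - ?M - r) ** G (r - 1))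
        = G u + (\<Sum>r\<in>{1..u}. ?Z (u + 1 - ?M - r) ** G (r - 1))"
      unfolding e1 using zm by (simp add: sum.insert)
    have b: "?Z (u + 1 - ?M - r) ** G (r - 1) = ?Z (u - ?M - r) ** G (r - 1)
               + ?L (?Z (u - ?M - ?M - r) ** G (r - 1))"
      if r: "r \<in> {1..u}" for r
    proof -
      have e: "u + 1 - ?M - r = (u - ?M - r) + 1" by simp
      have "?Z ((u - ?M - r) + 1) = ?Z (u - ?M - r) + ?L (?Z (u - ?M - r - ?M))"
        using u0 r by (intro Zrec_LL) auto
      moreover have "u - ?M - r - ?M = u - ?M - ?M - r" by simp
      moreover have "A1 ** G (r - 1) = G (r - 1) ** A1" using r by (intro Gc) auto
      ultimately show ?thesis unfolding e by (simp add: mm_rdistrib LL_comm)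
    qed
    have c: "(\<Sum>r\<in>{1..u}. ?Z (u - ?M - ?M - r) ** G (r - 1))
        = (\<Sum>r\<in>{1..u - ?M}. ?Z (u - ?M - ?M - r) ** G (r - 1))"
    proof (rule sum.mono_neutral_right)
      show "finite {1..u}" by simp
      show "{1..u - ?M} \<subseteq> {1..u}" by auto
      show "\<forall>i\<in>{1..u} - {1..u - ?M}. ?Z (u - ?M - ?M - i) ** G (i - 1) = 0"
      proof
        fix i assume "i \<in> {1..u} - {1..u - ?M}"
        then have "u - ?M - ?M - i < - ?M" by auto
        then show "?Z (u - ?M - ?M - i) ** G (i - 1) = 0" by (simp add: Z_neg)
      qed
    qed
    show ?thesis unfolding a c[symmetric] using b by (simp add: LL_sum sum.distrib algebra_simps)
  qed
  have X1: "Xsol A0 A1 m \<Psi> G (u + 1) = ?Z (u + 1) ** \<Psi> (- ?M)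
      + (\<Sum>r\<in>{- ?M + 1..0}. ?Z (u + 1 - ?M - r) ** D r)
      + (\<Sum>r\<in>{1..u + 1}. ?Z (u + 1 - ?M - r) ** G (r - 1))"
    unfolding Xsol_def D_def by simp
  have X2: "Xsol A0 A1 m \<Psi> G u = ?Z u ** \<Psi> (- ?M)
      + (\<Sum>r\<in>{- ?M + 1..0}. ?Z (u - ?M - r) ** D r)
      + (\<Sum>r\<in>{1..u}. ?Z (u - ?M - r) ** G (r - 1))"
    unfolding Xsol_def D_def by simp
  have X3: "Xsol A0 A1 m \<Psi> G (u - ?M) = ?Z (u - ?M) ** \<Psi> (- ?M)
      + (\<Sum>r\<in>{- ?M + 1..0}. ?Z (u - ?M - ?M - r) ** D r)
      + (\<Sum>r\<in>{1..u - ?M}. ?Z (u - ?M - ?M - r) ** G (r - 1))"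
    unfolding Xsol_def D_def by simp
  show ?thesis unfolding X1 X2 X3 T1 T2 T3 LL_add by (simp add: algebra_simps)
qed

lemma Xsol_is_solution:
  assumes Gc: "\<And>u. u \<ge> 0 \<Longrightarrow> A1 ** G u = G u ** A1"
    and Pc: "\<And>u. u \<in> {- int m..0} \<Longrightarrow> A1 ** \<Psi> u = \<Psi> u ** A1"
  shows "is_solution A0 A1 m \<Psi> G (Xsol A0 A1 m \<Psi> G)"
  unfolding is_solution_def
proof (intro conjI allI impI ballI)
  fix u :: int assume "u \<ge> 0"
  have "Xsol A0 A1 m \<Psi> G (u + 1) = Xsol A0 A1 m \<Psi> G u
           + LL A0 A1 (Xsol A0 A1 m \<Psi> G (u - int m)) + G u"
    by (rule Xrec[OF Gc Pc \<open>u \<ge> 0\<close>])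
  then show "Xsol A0 A1 m \<Psi> G (u + 1) - Xsol A0 A1 m \<Psi> G u =
         A0 ** Xsol A0 A1 m \<Psi> G (u - int m) + Xsol A0 A1 m \<Psi> G (u - int m) ** A1 + G u"
    unfolding LL_def by (simp add: algebra_simps)
next
  fix u assume "u \<in> {- int m..0}"
  then show "Xsol A0 A1 m \<Psi> G u = \<Psi> u" by (rule Xinit)
qed

lemma solution_unique:
  assumes Y: "is_solution A0 A1 m \<Psi> G Y" and X: "is_solution A0 A1 m \<Psi> G X"
  shows "u \<ge> - int m \<Longrightarrow> Y u = X u"
proof -
  have Yr: "\<And>u. u \<ge> 0 \<Longrightarrow> Y (u + 1) = Y u + (A0 ** Y (u - int m) + Y (u - int m) ** A1 + G u)"
    using Y unfolding is_solution_def by (metis diff_add_cancel add.commute)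
  have Xr: "\<And>u. u \<ge> 0 \<Longrightarrow> X (u + 1) = X u + (A0 ** X (u - int m) + X (u - int m) ** A1 + G u)"
    using X unfolding is_solution_def by (metis diff_add_cancel add.commute)
  have Yi: "\<And>u. u \<in> {- int m..0} \<Longrightarrow> Y u = \<Psi> u" using Y unfolding is_solution_def by blast
  have Xi: "\<And>u. u \<in> {- int m..0} \<Longrightarrow> X u = \<Psi> u" using X unfolding is_solution_def by blast
  have main: "\<forall>j\<le>n. Y (- int m + int j) = X (- int m + int j)" for n
  proof (induction n)
    case 0 then show ?case using Yi[of "- int m"] Xi[of "- int m"] by simp
  next
    case (Suc n)
    show ?case
    proof (intro allI impI)
      fix j assume j: "j \<le> Suc n"
      show "Y (- int m + int j) = X (- int m + int j)"
      proof (cases "j \<le> n")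
        case True then show ?thesis using Suc by blast
      next
        case False
        then have jn: "j = Suc n" using j by simp
        show ?thesis
        proof (cases "- int m + int j \<le> 0")
          case True
          then show ?thesis using Yi[of "- int m + int j"] Xi[of "- int m + int j"] by simp
        next
          case False
          define u' where "u' = - int m + int n"
          have u'0: "u' \<ge> 0" using False jn unfolding u'_def by simp
          have e: "- int m + int j = u' + 1" unfolding u'_def jn by simp
          have h1: "Y u' = X u'" using Suc unfolding u'_def by blast
          have "u' - int m = - int m + int (nat (int n - int m))" using u'0 unfolding u'_def by simp
          moreover have "nat (int n - int m) \<le> n" by simp
          ultimately have h2: "Y (u' - int m) = X (u' - int m)" using Suc by metis
          show ?thesis unfolding e using Yr[OF u'0] Xr[OF u'0] h1 h2 by simp
        qed
      qed
    qed
  qed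
  assume u: "u \<ge> - int m"
  have "u = - int m + int (nat (u + int m))" using u by simp
  then show "Y u = X u" using main[of "nat (u + int m)"] by (metis order_refl)
qed


theorem theorem9:
  fixes A0 A1 :: "real^'n^'n" and m :: nat
    and G \<Psi> :: "int \<Rightarrow> real^'n^'n"
  assumes "m \<ge> 1"
    and "\<And>u. u \<ge> 0 \<Longrightarrow> A1 ** G u = G u ** A1"
    and "\<And>u. u \<in> {- int m..0} \<Longrightarrow> A1 ** \<Psi> u = \<Psi> u ** A1"
  shows "is_solution A0 A1 m \<Psi> G (Xsol A0 A1 m \<Psi> G) \<and>
         (\<forall>Y. is_solution A0 A1 m \<Psi> G Y \<longrightarrow>
              (\<forall>u\<ge>- int m. Y u = Xsol A0 A1 m \<Psi> G u))"
proof -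
  have X: "is_solution A0 A1 m \<Psi> G (Xsol A0 A1 m \<Psi> G)"
    using assms(2,3) by (rule Xsol_is_solution)
  show ?thesis using X solution_unique[OF _ X] by blast
qed

end
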